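(* Let $(G,M,\Delta)$ be a Garside structure, $(H,N,\delta)$ a parabolic substructure, and $T$ the set of $(H,N)$-reduced elements of $G$. Put $\omega=\delta^{-1}\Delta$ and $\Phi(\alpha)=\Delta\alpha\Delta^{-1}$. Let $\theta\in T\setminus M$ with right $\Delta$-form $\theta=c\Delta^{-p}$, $p\ge1$, and let $\beta\in H\setminus N$ with right $\delta$-form $\beta=b\delta^{-k}$, $k\ge1$ (that is, $b\in N$ and $\delta\not\le_L b$). Then the right $\Delta$-form of $\beta\theta$ is $\beta\theta=\big(b\,\omega_1\cdots\omega_k\,\Phi^{-k}(c)\big)\Delta^{-k-p}$, where $\omega_i=\Phi^{-i+1}(\omega)$ for $i\in\{1,\dots,k\}$.
   Context: Let $G$ be a group and $M$ a submonoid with $M\cap M^{-1}=\{1\}$. Define $\alpha\le_L\beta$ iff $\alpha^{-1}\beta\in M$, and $\alpha\le_R\beta$ iff $\beta\alpha^{-1}\in M$. For $a\in M$ let $\mathrm{Div}_L(a)=\{b\in M: b\le_L a\}$, $\mathrm{Div}_R(a)=\{b\in M: b\le_R a\}$; $a$ is balanced if these coincide, and then $\mathrm{Div}(a)$ denotes this set. $M$ is Noetherian if each $a\in M$ admits an $n$ such that $a$ is not a product of more than $n$ non-trivial factors. A Garside structure $(G,M,\Delta)$: $\Delta\in M$ balanced, $M$ Noetherian, $\mathrm{Div}(\Delta)$ finite and generating $M$ as a monoid and $G$ as a group, $(G,\le_L)$ a lattice with meet $\wedge_L$. A parabolic substructure $(H,N,\delta)$: $\delta\in M$ balanced, $H$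 (resp. $N$) the subgroup (resp. submonoid) generated by $\mathrm{Div}(\delta)$, and $\mathrm{Div}(\delta)=\mathrm{Div}(\Delta)\cap N$; it is assumed $H\ne\{1\}$. $a\in M$ is unmovable if $\Delta\not\le_L a$; every $\alpha\in G$ has a unique right $\Delta$-form $\alpha=a\Delta^p$ ($a\in M$ unmovable, $p\in\mathbb Z$); analogously each $\beta\in H$ has a unique right $\delta$-form $\beta=b\delta^{q}$ with $b\in N$, $\delta\not\le_L b$, $q\in\mathbb Z$. $a\in M$ is $N$-reduced if $a\wedge_L\delta=1$. $\alpha$ with right $\Delta$-form $a\Delta^p$ is $(H,N)$-reduced if $a$ is $N$-reduced and either $p=0$, or $p<0$ and $\omega\not\le_L a$. *)

theory Defs
  imports "HOL-Algebra.Generated_Groups"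
begin

definition pointed_submonoid :: "('a, 'b) monoid_scheme \<Rightarrow> 'a set \<Rightarrow> bool" where
  "pointed_submonoid G M \<longleftrightarrow> M \<subseteq> carrier G \<and> \<one>\<^bsub>G\<^esub> \<in> M
     \<and> (\<forall>x\<in>M. \<forall>y\<in>M. x \<otimes>\<^bsub>G\<^esub> y \<in> M)
     \<and> {x \<in> M. inv\<^bsub>G\<^esub> x \<in> M} = {\<one>\<^bsub>G\<^esub>}"

definition leL :: "('a, 'b) monoid_scheme \<Rightarrow> 'a set \<Rightarrow> 'a \<Rightarrow> 'a \<Rightarrow> bool" where
  "leL G M x y \<longleftrightarrow> inv\<^bsub>G\<^esub> x \<otimes>\<^bsub>G\<^esub> y \<in> M"

definition leR :: "('a, 'b) monoid_scheme \<Rightarrow> 'a set \<Rightarrow> 'a \<Rightarrow> 'a \<Rightarrow> bool" where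
  "leR G M x y \<longleftrightarrow> y \<otimes>\<^bsub>G\<^esub> inv\<^bsub>G\<^esub> x \<in> M"

definition DivL :: "('a, 'b) monoid_scheme \<Rightarrow> 'a set \<Rightarrow> 'a \<Rightarrow> 'a set" where
  "DivL G M a = {b \<in> M. leL G M b a}"

definition DivR :: "('a, 'b) monoid_scheme \<Rightarrow> 'a set \<Rightarrow> 'a \<Rightarrow> 'a set" where
  "DivR G M a = {b \<in> M. leR G M b a}"

definition balanced :: "('a, 'b) monoid_scheme \<Rightarrow> 'a set \<Rightarrow> 'a \<Rightarrow> bool" where
  "balanced G M a \<longleftrightarrow> a \<in> M \<and> DivL G M a = DivR G M a"

abbreviation Div :: "('a, 'b) monoid_scheme \<Rightarrow> 'a set \<Rightarrow> 'a \<Rightarrow> 'a set" where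
  "Div G M a \<equiv> DivL G M a"

definition lprod :: "('a, 'b) monoid_scheme \<Rightarrow> 'a list \<Rightarrow> 'a" where
  "lprod G xs = foldr (\<lambda>x y. x \<otimes>\<^bsub>G\<^esub> y) xs \<one>\<^bsub>G\<^esub>"

definition noetherian :: "('a, 'b) monoid_scheme \<Rightarrow> 'a set \<Rightarrow> bool" where
  "noetherian G M \<longleftrightarrow> (\<forall>a\<in>M. \<exists>n::nat. \<forall>xs. set xs \<subseteq> M - {\<one>\<^bsub>G\<^esub>} \<and> lprod G xs = a
        \<longrightarrow> length xs \<le> n)"

inductive_set mgenerate :: "('a, 'b) monoid_scheme \<Rightarrow> 'a set \<Rightarrow> 'a set"
  for G and S where
    one: "\<one>\<^bsub>G\<^esub> \<in> mgenerate G S"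
  | incl: "s \<in> S \<Longrightarrow> s \<in> mgenerate G S"
  | mult: "x \<in> mgenerate G S \<Longrightarrow> y \<in> mgenerate G S \<Longrightarrow> x \<otimes>\<^bsub>G\<^esub> y \<in> mgenerate G S"

definition is_glbL :: "('a, 'b) monoid_scheme \<Rightarrow> 'a set \<Rightarrow> 'a \<Rightarrow> 'a \<Rightarrow> 'a \<Rightarrow> bool" where
  "is_glbL G M x y z \<longleftrightarrow> z \<in> carrier G \<and> leL G M z x \<and> leL G M z y
     \<and> (\<forall>w\<in>carrier G. leL G M w x \<and> leL G M w y \<longrightarrow> leL G M w z)"

definition is_lubL :: "('a, 'b) monoid_scheme \<Rightarrow> 'a set \<Rightarrow> 'a \<Rightarrow> 'a \<Rightarrow> 'a \<Rightarrow> bool" where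
  "is_lubL G M x y z \<longleftrightarrow> z \<in> carrier G \<and> leL G M x z \<and> leL G M y z
     \<and> (\<forall>w\<in>carrier G. leL G M x w \<and> leL G M y w \<longrightarrow> leL G M z w)"

definition meetL :: "('a, 'b) monoid_scheme \<Rightarrow> 'a set \<Rightarrow> 'a \<Rightarrow> 'a \<Rightarrow> 'a" where
  "meetL G M x y = (THE z. is_glbL G M x y z)"

definition lattice_L :: "('a, 'b) monoid_scheme \<Rightarrow> 'a set \<Rightarrow> bool" where
  "lattice_L G M \<longleftrightarrow> (\<forall>x\<in>carrier G. \<forall>y\<in>carrier G.
      (\<exists>z. is_glbL G M x y z) \<and> (\<exists>z. is_lubL G M x y z))"

definition garside_structure :: "('a, 'b) monoid_scheme \<Rightarrow> 'a set \<Rightarrow> 'a \<Rightarrow> bool" where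
  "garside_structure G M \<Delta> \<longleftrightarrow> group G \<and> pointed_submonoid G M
     \<and> balanced G M \<Delta> \<and> noetherian G M \<and> finite (Div G M \<Delta>)
     \<and> mgenerate G (Div G M \<Delta>) = M \<and> generate G (Div G M \<Delta>) = carrier G
     \<and> lattice_L G M"

definition parabolic_substructure ::
  "('a, 'b) monoid_scheme \<Rightarrow> 'a set \<Rightarrow> 'a \<Rightarrow> 'a set \<Rightarrow> 'a set \<Rightarrow> 'a \<Rightarrow> bool" where
  "parabolic_substructure G M \<Delta> H N \<delta> \<longleftrightarrow> balanced G M \<delta>
     \<and> H = generate G (Div G M \<delta>) \<and> N = mgenerate G (Div G M \<delta>)
     \<and> Div G M \<delta> = Div G M \<Delta> \<inter> N \<and> H \<noteq> {\<one>\<^bsub>G\<^esub>}"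

definition unmovable :: "('a, 'b) monoid_scheme \<Rightarrow> 'a set \<Rightarrow> 'a \<Rightarrow> 'a \<Rightarrow> bool" where
  "unmovable G M \<Delta> a \<longleftrightarrow> a \<in> M \<and> \<not> leL G M \<Delta> a"

definition right_Delta_form ::
  "('a, 'b) monoid_scheme \<Rightarrow> 'a set \<Rightarrow> 'a \<Rightarrow> 'a \<Rightarrow> 'a \<Rightarrow> int \<Rightarrow> bool" where
  "right_Delta_form G M \<Delta> \<alpha> a p \<longleftrightarrow> unmovable G M \<Delta> a \<and> \<alpha> = a \<otimes>\<^bsub>G\<^esub> (\<Delta> [^]\<^bsub>G\<^esub> p)"

definition right_delta_form ::
  "('a, 'b) monoid_scheme \<Rightarrow> 'a set \<Rightarrow> 'a set \<Rightarrow> 'a \<Rightarrow> 'a \<Rightarrow> 'a \<Rightarrow> int \<Rightarrow> bool" where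
  "right_delta_form G M N \<delta> \<beta> b q \<longleftrightarrow> b \<in> N \<and> \<not> leL G M \<delta> b \<and> \<beta> = b \<otimes>\<^bsub>G\<^esub> (\<delta> [^]\<^bsub>G\<^esub> q)"

definition N_reduced :: "('a, 'b) monoid_scheme \<Rightarrow> 'a set \<Rightarrow> 'a \<Rightarrow> 'a \<Rightarrow> bool" where
  "N_reduced G M \<delta> a \<longleftrightarrow> a \<in> M \<and> meetL G M a \<delta> = \<one>\<^bsub>G\<^esub>"

definition omega :: "('a, 'b) monoid_scheme \<Rightarrow> 'a \<Rightarrow> 'a \<Rightarrow> 'a" where
  "omega G \<Delta> \<delta> = inv\<^bsub>G\<^esub> \<delta> \<otimes>\<^bsub>G\<^esub> \<Delta>"

definition HN_reduced ::
  "('a, 'b) monoid_scheme \<Rightarrow> 'a set \<Rightarrow> 'a \<Rightarrow> 'a \<Rightarrow> 'a \<Rightarrow> bool" where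
  "HN_reduced G M \<Delta> \<delta> \<alpha> \<longleftrightarrow> \<alpha> \<in> carrier G \<and> (\<exists>a p. right_Delta_form G M \<Delta> \<alpha> a p
      \<and> N_reduced G M \<delta> a \<and> (p = 0 \<or> (p < 0 \<and> \<not> leL G M (omega G \<Delta> \<delta>) a)))"

definition Phi_pow :: "('a, 'b) monoid_scheme \<Rightarrow> 'a \<Rightarrow> int \<Rightarrow> 'a \<Rightarrow> 'a" where
  "Phi_pow G \<Delta> n x = (\<Delta> [^]\<^bsub>G\<^esub> n) \<otimes>\<^bsub>G\<^esub> x \<otimes>\<^bsub>G\<^esub> (\<Delta> [^]\<^bsub>G\<^esub> (- n))"

fun omega_prod :: "('a, 'b) monoid_scheme \<Rightarrow> 'a \<Rightarrow> 'a \<Rightarrow> nat \<Rightarrow> 'a" where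
  "omega_prod G \<Delta> \<delta> 0 = \<one>\<^bsub>G\<^esub>"
| "omega_prod G \<Delta> \<delta> (Suc i) =
     omega_prod G \<Delta> \<delta> i \<otimes>\<^bsub>G\<^esub> Phi_pow G \<Delta> (- int (Suc i) + 1) (omega G \<Delta> \<delta>)"

end

theory Submission
  imports Defs
begin

context group
begin

lemma gc1 [simp]: "x \<in> carrier G \<Longrightarrow> y \<in> carrier G \<Longrightarrow> inv x \<otimes> (x \<otimes> y) = y"
  by (simp add: m_assoc[symmetric])
lemma gc2 [simp]: "x \<in> carrier G \<Longrightarrow> y \<in> carrier G \<Longrightarrow> x \<otimes> (inv x \<otimes> y) = y"
  by (simp add: m_assoc[symmetric])

lemma ps_sub: "pointed_submonoid G M \<Longrightarrow> M \<subseteq> carrier G"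
  by (simp add: pointed_submonoid_def)
lemma ps_one: "pointed_submonoid G M \<Longrightarrow> \<one> \<in> M"
  by (simp add: pointed_submonoid_def)
lemma ps_mult: "pointed_submonoid G M \<Longrightarrow> x \<in> M \<Longrightarrow> y \<in> M \<Longrightarrow> x \<otimes> y \<in> M"
  by (simp add: pointed_submonoid_def)
lemma ps_anti: "pointed_submonoid G M \<Longrightarrow> x \<in> M \<Longrightarrow> inv x \<in> M \<Longrightarrow> x = \<one>"
  unfolding pointed_submonoid_def by blast

lemma mgen_sub:
  assumes "pointed_submonoid G M" "S \<subseteq> M"
  shows "mgenerate G S \<subseteq> M"
proof
  fix x assume "x \<in> mgenerate G S" then show "x \<in> M"
    by induct (use assms ps_one ps_mult in auto)
qed

lemma conj_inv:
  assumes PM: "pointed_submonoid G M" and bal: "balanced G M d"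
    and x: "x \<in> mgenerate G (DivL G M d)"
  shows "inv d \<otimes> x \<otimes> d \<in> M"
  using x
proof induct
  have d: "d \<in> carrier G" using bal ps_sub[OF PM] by (auto simp: balanced_def)
  case one then show ?case using d ps_one[OF PM] by simp
next
  have d: "d \<in> carrier G" using bal ps_sub[OF PM] by (auto simp: balanced_def)
  case (incl s)
  have sM: "s \<in> M" and sd: "inv s \<otimes> d \<in> M" using incl by (auto simp: DivL_def leL_def)
  have s: "s \<in> carrier G" using sM ps_sub[OF PM] by auto
  have "d \<otimes> inv (inv s \<otimes> d) = s" using s d by (simp add: inv_mult_group m_assoc[symmetric])
  then have "inv s \<otimes> d \<in> DivR G M d" using sd sM by (simp add: DivR_def leR_def)
  then have "inv s \<otimes> d \<in> DivL G M d" using bal by (simp add: balanced_def)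
  then have "inv (inv s \<otimes> d) \<otimes> d \<in> M" by (simp add: DivL_def leL_def)
  also have "inv (inv s \<otimes> d) \<otimes> d = inv d \<otimes> s \<otimes> d" using s d by (simp add: inv_mult_group)
  finally show ?case .
next
  have d: "d \<in> carrier G" using bal ps_sub[OF PM] by (auto simp: balanced_def)
  case (mult x y)
  have sub: "mgenerate G (DivL G M d) \<subseteq> M"
    by (rule mgen_sub[OF PM]) (auto simp: DivL_def)
  have x: "x \<in> carrier G" and y: "y \<in> carrier G" using mult sub ps_sub[OF PM] by auto
  have "inv d \<otimes> (x \<otimes> y) \<otimes> d = (inv d \<otimes> x \<otimes> d) \<otimes> (inv d \<otimes> y \<otimes> d)"
    using x y d by (simp add: m_assoc)
  then show ?case using mult ps_mult[OF PM] by simp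
qed

lemma conj_fwd:
  assumes PM: "pointed_submonoid G M" and bal: "balanced G M d"
    and x: "x \<in> mgenerate G (DivL G M d)"
  shows "d \<otimes> x \<otimes> inv d \<in> M"
  using x
proof induct
  have d: "d \<in> carrier G" using bal ps_sub[OF PM] by (auto simp: balanced_def)
  case one then show ?case using d ps_one[OF PM] by simp
next
  have d: "d \<in> carrier G" using bal ps_sub[OF PM] by (auto simp: balanced_def)
  case (incl s)
  have "s \<in> DivR G M d" using incl bal by (simp add: balanced_def)
  then have sM: "s \<in> M" and sd: "d \<otimes> inv s \<in> M" by (auto simp: DivR_def leR_def)
  have s: "s \<in> carrier G" using sM ps_sub[OF PM] by auto
  have "inv (d \<otimes> inv s) \<otimes> d = s" using s d by (simp add: inv_mult_group m_assoc)
  then have "d \<otimes> inv s \<in> DivL G M d" using sd sM by (simp add: DivL_def leL_def)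
  then have "d \<otimes> inv s \<in> DivR G M d" using bal by (simp add: balanced_def)
  then have "d \<otimes> inv (d \<otimes> inv s) \<in> M" by (simp add: DivR_def leR_def)
  also have "d \<otimes> inv (d \<otimes> inv s) = d \<otimes> s \<otimes> inv d" using s d by (simp add: inv_mult_group m_assoc)
  finally show ?case .
next
  have d: "d \<in> carrier G" using bal ps_sub[OF PM] by (auto simp: balanced_def)
  case (mult x y)
  have sub: "mgenerate G (DivL G M d) \<subseteq> M"
    by (rule mgen_sub[OF PM]) (auto simp: DivL_def)
  have x: "x \<in> carrier G" and y: "y \<in> carrier G" using mult sub ps_sub[OF PM] by auto
  have "d \<otimes> (x \<otimes> y) \<otimes> inv d = (d \<otimes> x \<otimes> inv d) \<otimes> (d \<otimes> y \<otimes> inv d)"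
    using x y d by (simp add: m_assoc)
  then show ?case using mult ps_mult[OF PM] by simp
qed


lemma leL_trans:
  assumes PM: "pointed_submonoid G M" and c: "x \<in> carrier G" "y \<in> carrier G" "z \<in> carrier G"
    and "leL G M x y" "leL G M y z"
  shows "leL G M x z"
proof -
  have "(inv x \<otimes> y) \<otimes> (inv y \<otimes> z) \<in> M" using assms ps_mult[OF PM] by (simp add: leL_def)
  then show ?thesis using c by (simp add: leL_def m_assoc)
qed

lemma step:
  assumes PM: "pointed_submonoid G M"
    and phiM: "\<And>x. x \<in> M \<Longrightarrow> D \<otimes> x \<otimes> inv D \<in> M"
    and phiI: "\<And>x. x \<in> M \<Longrightarrow> inv D \<otimes> x \<otimes> D \<in> M"
    and lat: "\<And>x y. x \<in> carrier G \<Longrightarrow> y \<in> carrier G \<Longrightarrow> \<exists>z. is_glbL G M x y z"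
    and d: "d \<in> M" and D: "D \<in> M" and om: "inv d \<otimes> D \<in> M"
    and dred: "\<And>s. s \<in> M \<Longrightarrow> leL G M s (inv d \<otimes> D) \<Longrightarrow> leL G M s d \<Longrightarrow> s = \<one>"
    and u: "u \<in> M"
    and ured: "\<And>s. s \<in> M \<Longrightarrow> leL G M s u \<Longrightarrow> leL G M s d \<Longrightarrow> s = \<one>"
  shows "inv d \<otimes> u \<otimes> D \<in> M"
    and "\<And>s. s \<in> M \<Longrightarrow> leL G M s (inv d \<otimes> u \<otimes> D) \<Longrightarrow> leL G M s d \<Longrightarrow> s = \<one>"
proof -
  have sub: "M \<subseteq> carrier G" using ps_sub[OF PM] .
  have dc: "d \<in> carrier G" and Dc: "D \<in> carrier G" and uc: "u \<in> carrier G"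
    using d D u sub by auto
  have "(inv d \<otimes> D) \<otimes> (inv D \<otimes> u \<otimes> D) \<in> M" using om phiI[OF u] ps_mult[OF PM] by simp
  then show vM: "inv d \<otimes> u \<otimes> D \<in> M" using dc Dc uc by (simp add: m_assoc)
  define v where "v = inv d \<otimes> u \<otimes> D"
  have vc: "v \<in> carrier G" using vM sub v_def by auto
  fix s assume sM: "s \<in> M" and sv: "leL G M s (inv d \<otimes> u \<otimes> D)" and sd: "leL G M s d"
  have sc: "s \<in> carrier G" using sM sub by auto
  obtain z where glb: "is_glbL G M v D z" using lat[OF vc Dc] by blast
  have zc: "z \<in> carrier G" and zv: "leL G M z v" and zD: "leL G M z D"
    and zmax: "\<And>w. w \<in> carrier G \<Longrightarrow> leL G M w v \<Longrightarrow> leL G M w D \<Longrightarrow> leL G M w z"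
    using glb by (auto simp: is_glbL_def)
  have dD: "leL G M d D" using om by (simp add: leL_def)
  have sD: "leL G M s D" by (rule leL_trans[OF PM sc dc Dc sd dD])
  have sz: "leL G M s z" using zmax[OF sc] sv sD v_def by simp
  define \<omega> where "\<omega> = inv d \<otimes> D"
  have \<omega>c: "\<omega> \<in> carrier G" using \<omega>_def dc Dc by simp
  have \<omega>v: "leL G M \<omega> v" using phiI[OF u] dc Dc uc unfolding leL_def \<omega>_def v_def
    by (simp add: m_assoc inv_mult_group)
  have \<omega>D: "leL G M \<omega> D" using phiI[OF d] dc Dc unfolding leL_def \<omega>_def
    by (simp add: m_assoc inv_mult_group)
  have \<omega>z: "leL G M \<omega> z" using zmax[OF \<omega>c \<omega>v \<omega>D] .
  define w0 where "w0 = inv \<omega> \<otimes> z"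
  have w0M: "w0 \<in> M" using \<omega>z by (simp add: leL_def w0_def)
  have w0c: "w0 \<in> carrier G" using w0M sub by auto
  define y where "y = D \<otimes> w0 \<otimes> inv D"
  have yM: "y \<in> M" using phiM[OF w0M] y_def by simp
  have "D \<otimes> (inv z \<otimes> v) \<otimes> inv D \<in> M" using phiM zv by (simp add: leL_def)
  then have yu: "leL G M y u" using dc Dc uc zc unfolding leL_def y_def w0_def \<omega>_def v_def
    by (simp add: m_assoc inv_mult_group)
  have "D \<otimes> (inv z \<otimes> D) \<otimes> inv D \<in> M" using phiM zD by (simp add: leL_def)
  then have yd: "leL G M y d" using dc Dc uc zc unfolding leL_def y_def w0_def \<omega>_def
    by (simp add: m_assoc inv_mult_group)
  have "y = \<one>" using ured[OF yM yu yd] .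
  moreover have "w0 = inv D \<otimes> y \<otimes> D" unfolding y_def using w0c Dc by (simp add: m_assoc)
  ultimately have "w0 = \<one>" using Dc by simp
  moreover have "z = \<omega> \<otimes> w0" unfolding w0_def using zc \<omega>c by simp
  ultimately have "z = \<omega>" using \<omega>c by simp
  then have "leL G M s \<omega>" using sz by simp
  then show "s = \<one>" using dred[OF sM] sd \<omega>_def by simp
qed



lemma iter:
  assumes PM: "pointed_submonoid G M"
    and phiM: "\<And>x. x \<in> M \<Longrightarrow> D \<otimes> x \<otimes> inv D \<in> M"
    and phiI: "\<And>x. x \<in> M \<Longrightarrow> inv D \<otimes> x \<otimes> D \<in> M"
    and lat: "\<And>x y. x \<in> carrier G \<Longrightarrow> y \<in> carrier G \<Longrightarrow> \<exists>z. is_glbL G M x y z"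
    and d: "d \<in> M" and D: "D \<in> M" and om: "inv d \<otimes> D \<in> M"
    and dred: "\<And>s. s \<in> M \<Longrightarrow> leL G M s (inv d \<otimes> D) \<Longrightarrow> leL G M s d \<Longrightarrow> s = \<one>"
    and c: "c \<in> M"
    and cred: "\<And>s. s \<in> M \<Longrightarrow> leL G M s c \<Longrightarrow> leL G M s d \<Longrightarrow> s = \<one>"
  shows "inv (d [^] k) \<otimes> c \<otimes> D [^] k \<in> M \<and>
     (\<forall>s. s \<in> M \<longrightarrow> leL G M s (inv (d [^] (k::nat)) \<otimes> c \<otimes> D [^] k) \<longrightarrow> leL G M s d \<longrightarrow> s = \<one>)"
proof (induction k)
  case 0
  then show ?case using c cred ps_sub[OF PM] by auto
next
  case (Suc k)
  have sub: "M \<subseteq> carrier G" using ps_sub[OF PM] .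
  have dc: "d \<in> carrier G" and Dc: "D \<in> carrier G" and cc: "c \<in> carrier G"
    using d D c sub by auto
  define u where "u = inv (d [^] k) \<otimes> c \<otimes> D [^] k"
  have uM: "u \<in> M" and ured: "\<And>s. s \<in> M \<Longrightarrow> leL G M s u \<Longrightarrow> leL G M s d \<Longrightarrow> s = \<one>"
    using Suc u_def by auto
  have eq: "inv (d [^] Suc k) \<otimes> c \<otimes> D [^] Suc k = inv d \<otimes> u \<otimes> D"
    unfolding u_def using dc Dc cc by (simp add: m_assoc inv_mult_group)
  show ?case unfolding eq
    using step[OF PM phiM phiI lat d D om dred uM ured] by blast
qed

lemma nomove:
  assumes PM: "pointed_submonoid G M"
    and lat: "\<And>x y. x \<in> carrier G \<Longrightarrow> y \<in> carrier G \<Longrightarrow> \<exists>z. is_glbL G M x y z"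
    and d: "d \<in> M" and D: "D \<in> M" and om: "inv d \<otimes> D \<in> M"
    and b: "b \<in> M" and bconj: "inv d \<otimes> b \<otimes> d \<in> M" and nb: "\<not> leL G M d b"
    and a: "a \<in> M"
    and ared: "\<And>s. s \<in> M \<Longrightarrow> leL G M s a \<Longrightarrow> leL G M s d \<Longrightarrow> s = \<one>"
  shows "\<not> leL G M D (b \<otimes> a)"
proof
  assume Da: "leL G M D (b \<otimes> a)"
  have sub: "M \<subseteq> carrier G" using ps_sub[OF PM] .
  have dc: "d \<in> carrier G" and Dc: "D \<in> carrier G" and bc: "b \<in> carrier G" and ac: "a \<in> carrier G"
    using d D b a sub by auto
  have dD: "leL G M d D" using om by (simp add: leL_def)
  have da: "leL G M d (b \<otimes> a)" by (rule leL_trans[OF PM dc Dc _ dD Da]) (use bc ac in simp)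
  obtain z where glb: "is_glbL G M (b \<otimes> a) (b \<otimes> d) z" using lat bc ac dc by blast
  have zc: "z \<in> carrier G" and za: "leL G M z (b \<otimes> a)" and zd: "leL G M z (b \<otimes> d)"
    and zmax: "\<And>w. w \<in> carrier G \<Longrightarrow> leL G M w (b \<otimes> a) \<Longrightarrow> leL G M w (b \<otimes> d) \<Longrightarrow> leL G M w z"
    using glb by (auto simp: is_glbL_def)
  have dbd: "leL G M d (b \<otimes> d)" using bconj dc bc by (simp add: leL_def m_assoc)
  have dz: "leL G M d z" using zmax[OF dc da dbd] .
  have "leL G M b (b \<otimes> a)" using a bc ac by (simp add: leL_def)
  moreover have "leL G M b (b \<otimes> d)" using d bc dc by (simp add: leL_def)
  ultimately have bz: "leL G M b z" using zmax bc by simp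
  define w where "w = inv b \<otimes> z"
  have wM: "w \<in> M" using bz by (simp add: leL_def w_def)
  have wa: "leL G M w a" using za bc zc ac by (simp add: leL_def w_def inv_mult_group m_assoc)
  have wd: "leL G M w d" using zd bc zc dc by (simp add: leL_def w_def inv_mult_group m_assoc)
  have "w = \<one>" using ared[OF wM wa wd] .
  moreover have "z = b \<otimes> w" unfolding w_def using bc zc by simp
  ultimately have "z = b" using bc by simp
  then show False using dz nb by simp
qed

lemma powM:
  assumes PM: "pointed_submonoid G M" and D: "D \<in> M"
  shows "D [^] (n::nat) \<in> M"
  by (induction n) (use ps_one[OF PM] ps_mult[OF PM] D in auto)

lemma form_uniq1:
  assumes PM: "pointed_submonoid G M"
    and phiI: "\<And>x. x \<in> M \<Longrightarrow> inv D \<otimes> x \<otimes> D \<in> M"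
    and D: "D \<in> M"
    and x: "unmovable G M D x" and y: "unmovable G M D y"
    and eq: "x \<otimes> D [^] i = y \<otimes> D [^] j" and ij: "i \<le> (j::int)"
  shows "x = y"
proof -
  have sub: "M \<subseteq> carrier G" using ps_sub[OF PM] .
  have xM: "x \<in> M" and yM: "y \<in> M" and nx: "\<not> leL G M D x"
    using x y by (auto simp: unmovable_def)
  have Dc: "D \<in> carrier G" and xc: "x \<in> carrier G" and yc: "y \<in> carrier G" using D xM yM sub by auto
  obtain n where n: "j = int n + i" using ij by (metis add.commute zle_iff_zadd)
  have "x \<otimes> D [^] i = (y \<otimes> D [^] n) \<otimes> D [^] i"
    using eq n Dc yc by (simp add: int_pow_mult int_pow_int m_assoc)
  then have xe: "x = y \<otimes> D [^] n" using Dc xc yc by (metis int_pow_closed m_closed nat_pow_closed right_cancel)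
  show ?thesis
  proof (cases n)
    case 0 then show ?thesis using xe yc by simp
  next
    case (Suc m)
    have "(inv D \<otimes> y \<otimes> D) \<otimes> D [^] m \<in> M" using phiI[OF yM] powM[OF PM D] ps_mult[OF PM] by simp
    then have "leL G M D x" unfolding xe Suc leL_def using Dc yc nat_pow_Suc2[OF Dc, of m]
      by (simp add: m_assoc)
    then show ?thesis using nx by simp
  qed
qed

lemma form_uniq:
  assumes PM: "pointed_submonoid G M"
    and phiI: "\<And>x. x \<in> M \<Longrightarrow> inv D \<otimes> x \<otimes> D \<in> M"
    and D: "D \<in> M"
    and x: "unmovable G M D x" and y: "unmovable G M D y"
    and eq: "x \<otimes> D [^] (i::int) = y \<otimes> D [^] (j::int)"
  shows "x = y"
proof (cases "i \<le> j")
  case True then show ?thesis using form_uniq1[OF PM phiI D x y eq] by simp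
next
  case False then show ?thesis using form_uniq1[OF PM phiI D y x eq[symmetric]] by simp
qed


lemma omega_prod_eq:
  assumes "D \<in> carrier G" "d \<in> carrier G"
  shows "omega_prod G D d k = inv (d [^] k) \<otimes> D [^] k"
proof (induction k)
  case 0 then show ?case by simp
next
  case (Suc k)
  have e: "- int (Suc k) + 1 = - int k" by simp
  have c1: "d [^] k \<otimes> d = d \<otimes> d [^] k" using nat_pow_Suc2[OF assms(2), of k] by simp
  have "omega_prod G D d (Suc k) = inv (d [^] k) \<otimes> D [^] k \<otimes> (inv (D [^] k) \<otimes> (inv d \<otimes> D) \<otimes> D [^] k)"
    using Suc assms by (simp add: e Phi_pow_def omega_def int_pow_neg_int int_pow_int)
  also have "\<dots> = inv (d \<otimes> d [^] k) \<otimes> (D [^] k \<otimes> D)"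
    using assms nat_pow_Suc2[OF assms(1), of k] by (simp add: m_assoc inv_mult_group)
  finally show ?case using c1 by simp
qed

end


theorem lemma3p10:
  fixes G :: "('a, 'b) monoid_scheme" and M N H :: "'a set" and \<Delta> \<delta> \<theta> \<beta> b c :: 'a
    and p k :: nat
  assumes gar: "garside_structure G M \<Delta>"
    and par: "parabolic_substructure G M \<Delta> H N \<delta>"
    and thetaT: "HN_reduced G M \<Delta> \<delta> \<theta>"
    and thetanM: "\<theta> \<notin> M"
    and thetaform: "right_Delta_form G M \<Delta> \<theta> c (- int p)"
    and p1: "p \<ge> 1"
    and betaH: "\<beta> \<in> H" and betanN: "\<beta> \<notin> N"
    and betaform: "right_delta_form G M N \<delta> \<beta> b (- int k)"
    and k1: "k \<ge> 1"
  shows "right_Delta_form G M \<Delta> (\<beta> \<otimes>\<^bsub>G\<^esub> \<theta>)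
           (b \<otimes>\<^bsub>G\<^esub> omega_prod G \<Delta> \<delta> k \<otimes>\<^bsub>G\<^esub> Phi_pow G \<Delta> (- int k) c)
           (- int k - int p)"
proof -
  have grp: "group G" and PM: "pointed_submonoid G M" and balD: "balanced G M \<Delta>"
    and genM: "mgenerate G (DivL G M \<Delta>) = M" and latt: "lattice_L G M"
    using gar unfolding garside_structure_def by blast+
  interpret group G by (rule grp)
  have bald: "balanced G M \<delta>" and Ndef: "N = mgenerate G (DivL G M \<delta>)"
    and Divd: "DivL G M \<delta> = DivL G M \<Delta> \<inter> N"
    using par unfolding parabolic_substructure_def by blast+
  have sub: "M \<subseteq> carrier G" using ps_sub[OF PM] .
  have DM: "\<Delta> \<in> M" and dM: "\<delta> \<in> M" using balD bald by (auto simp: balanced_def)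
  have Dc: "\<Delta> \<in> carrier G" and dc: "\<delta> \<in> carrier G" using DM dM sub by auto
  have phiM: "\<And>x. x \<in> M \<Longrightarrow> \<Delta> \<otimes>\<^bsub>G\<^esub> x \<otimes>\<^bsub>G\<^esub> inv\<^bsub>G\<^esub> \<Delta> \<in> M"
    using conj_fwd[OF PM balD] genM by auto
  have phiI: "\<And>x. x \<in> M \<Longrightarrow> inv\<^bsub>G\<^esub> \<Delta> \<otimes>\<^bsub>G\<^esub> x \<otimes>\<^bsub>G\<^esub> \<Delta> \<in> M"
    using conj_inv[OF PM balD] genM by auto
  have lat: "\<And>x y. x \<in> carrier G \<Longrightarrow> y \<in> carrier G \<Longrightarrow> \<exists>z. is_glbL G M x y z"
    using latt by (auto simp: lattice_L_def)
  have NM: "N \<subseteq> M" unfolding Ndef by (rule mgen_sub[OF PM]) (auto simp: DivL_def)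
  have ddiv: "\<delta> \<in> DivL G M \<delta>" using dM dc ps_one[OF PM] by (simp add: DivL_def leL_def)
  then have dN: "\<delta> \<in> N" unfolding Ndef by (rule mgenerate.incl)
  have om: "inv\<^bsub>G\<^esub> \<delta> \<otimes>\<^bsub>G\<^esub> \<Delta> \<in> M" using ddiv Divd by (auto simp: DivL_def leL_def)
  have dred: "\<And>s. s \<in> M \<Longrightarrow> leL G M s (inv\<^bsub>G\<^esub> \<delta> \<otimes>\<^bsub>G\<^esub> \<Delta>) \<Longrightarrow> leL G M s \<delta> \<Longrightarrow> s = \<one>\<^bsub>G\<^esub>"
  proof -
    fix s assume sM: "s \<in> M" and so: "leL G M s (inv\<^bsub>G\<^esub> \<delta> \<otimes>\<^bsub>G\<^esub> \<Delta>)" and sd: "leL G M s \<delta>"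
    have sc: "s \<in> carrier G" using sM sub by auto
    have "s \<in> DivL G M \<delta>" using sM sd by (simp add: DivL_def)
    then have "s \<in> N" unfolding Ndef by (rule mgenerate.incl)
    then have dsN: "\<delta> \<otimes>\<^bsub>G\<^esub> s \<in> N" using dN unfolding Ndef by (rule mgenerate.mult[rotated])
    have "leL G M (\<delta> \<otimes>\<^bsub>G\<^esub> s) \<Delta>" using so sc dc Dc by (simp add: leL_def inv_mult_group m_assoc)
    then have "\<delta> \<otimes>\<^bsub>G\<^esub> s \<in> DivL G M \<delta>" using Divd dsN NM by (auto simp: DivL_def)
    then have "inv\<^bsub>G\<^esub> s \<in> M" using sc dc by (simp add: DivL_def leL_def inv_mult_group m_assoc)
    then show "s = \<one>\<^bsub>G\<^esub>" using ps_anti[OF PM sM] by simp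
  qed
  have cunm: "unmovable G M \<Delta> c" and theq: "\<theta> = c \<otimes>\<^bsub>G\<^esub> \<Delta> [^]\<^bsub>G\<^esub> (- int p)"
    using thetaform by (auto simp: right_Delta_form_def)
  obtain a p' where af: "right_Delta_form G M \<Delta> \<theta> a p'" and ared: "N_reduced G M \<delta> a"
    using thetaT by (auto simp: HN_reduced_def)
  have "a = c" using form_uniq[OF PM phiI DM, of a c p' "- int p"] af cunm theq
    by (auto simp: right_Delta_form_def)
  then have cM: "c \<in> M" and meet: "meetL G M c \<delta> = \<one>\<^bsub>G\<^esub>" using ared by (auto simp: N_reduced_def)
  have cc: "c \<in> carrier G" using cM sub by auto
  have uniq: "\<exists>!z. is_glbL G M c \<delta> z"
  proof -
    obtain z where z: "is_glbL G M c \<delta> z" using lat[OF cc dc] by blast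
    moreover have "z' = z" if z': "is_glbL G M c \<delta> z'" for z'
    proof -
      have zc: "z \<in> carrier G" and z'c: "z' \<in> carrier G" using z z' by (auto simp: is_glbL_def)
      have "leL G M z z'" "leL G M z' z" using z z' zc z'c by (auto simp: is_glbL_def)
      then have m1: "inv\<^bsub>G\<^esub> z' \<otimes>\<^bsub>G\<^esub> z \<in> M" and m2: "inv\<^bsub>G\<^esub> z \<otimes>\<^bsub>G\<^esub> z' \<in> M" by (auto simp: leL_def)
      have "inv\<^bsub>G\<^esub> (inv\<^bsub>G\<^esub> z' \<otimes>\<^bsub>G\<^esub> z) = inv\<^bsub>G\<^esub> z \<otimes>\<^bsub>G\<^esub> z'" using zc z'c by (simp add: inv_mult_group)
      then have "inv\<^bsub>G\<^esub> z' \<otimes>\<^bsub>G\<^esub> z = \<one>\<^bsub>G\<^esub>" using ps_anti[OF PM m1] m2 by simp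
      moreover have "z = z' \<otimes>\<^bsub>G\<^esub> (inv\<^bsub>G\<^esub> z' \<otimes>\<^bsub>G\<^esub> z)" using zc z'c by simp
      ultimately show ?thesis using z'c by simp
    qed
    ultimately show ?thesis by blast
  qed
  have glb1: "is_glbL G M c \<delta> \<one>\<^bsub>G\<^esub>" using theI'[OF uniq] meet by (simp add: meetL_def)
  have cred: "\<And>s. s \<in> M \<Longrightarrow> leL G M s c \<Longrightarrow> leL G M s \<delta> \<Longrightarrow> s = \<one>\<^bsub>G\<^esub>"
  proof -
    fix s assume sM: "s \<in> M" and "leL G M s c" "leL G M s \<delta>"
    then have "leL G M s \<one>\<^bsub>G\<^esub>" using glb1 sM sub by (auto simp: is_glbL_def)
    then have "inv\<^bsub>G\<^esub> s \<in> M" using sM sub by (auto simp: leL_def)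
    then show "s = \<one>\<^bsub>G\<^esub>" using ps_anti[OF PM sM] by simp
  qed
  have bN: "b \<in> N" and nb: "\<not> leL G M \<delta> b" and beq: "\<beta> = b \<otimes>\<^bsub>G\<^esub> \<delta> [^]\<^bsub>G\<^esub> (- int k)"
    using betaform by (auto simp: right_delta_form_def)
  have bM: "b \<in> M" using bN NM by auto
  have bc: "b \<in> carrier G" using bM sub by auto
  have bconj: "inv\<^bsub>G\<^esub> \<delta> \<otimes>\<^bsub>G\<^esub> b \<otimes>\<^bsub>G\<^esub> \<delta> \<in> M" using conj_inv[OF PM bald] bN Ndef by auto
  define u where "u = inv\<^bsub>G\<^esub> (\<delta> [^]\<^bsub>G\<^esub> k) \<otimes>\<^bsub>G\<^esub> c \<otimes>\<^bsub>G\<^esub> \<Delta> [^]\<^bsub>G\<^esub> k"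
  have it: "u \<in> M" "\<And>s. s \<in> M \<Longrightarrow> leL G M s u \<Longrightarrow> leL G M s \<delta> \<Longrightarrow> s = \<one>\<^bsub>G\<^esub>"
    using iter[OF PM phiM phiI lat dM DM om dred cM cred, of k] u_def by auto
  have nm: "\<not> leL G M \<Delta> (b \<otimes>\<^bsub>G\<^esub> u)"
    by (rule nomove[OF PM lat dM DM om bM bconj nb it])
  have aeq: "b \<otimes>\<^bsub>G\<^esub> omega_prod G \<Delta> \<delta> k \<otimes>\<^bsub>G\<^esub> Phi_pow G \<Delta> (- int k) c = b \<otimes>\<^bsub>G\<^esub> u"
    unfolding u_def using omega_prod_eq[OF Dc dc, of k] Dc dc bc cc
    by (simp add: Phi_pow_def int_pow_neg_int int_pow_int m_assoc)
  have e2: "- int k - int p = - int (p + k)" by simp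
  have pw1: "\<Delta> [^]\<^bsub>G\<^esub> (- int k - int p) = inv\<^bsub>G\<^esub> (\<Delta> [^]\<^bsub>G\<^esub> (p + k))"
    unfolding e2 by (rule int_pow_neg_int[OF Dc])
  have pw2: "inv\<^bsub>G\<^esub> (\<Delta> [^]\<^bsub>G\<^esub> (p + k)) = inv\<^bsub>G\<^esub> (\<Delta> [^]\<^bsub>G\<^esub> k) \<otimes>\<^bsub>G\<^esub> inv\<^bsub>G\<^esub> (\<Delta> [^]\<^bsub>G\<^esub> p)"
    using Dc by (simp add: nat_pow_mult[symmetric] inv_mult_group)
  have "\<beta> \<otimes>\<^bsub>G\<^esub> \<theta> = (b \<otimes>\<^bsub>G\<^esub> u) \<otimes>\<^bsub>G\<^esub> \<Delta> [^]\<^bsub>G\<^esub> (- int k - int p)"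
    unfolding beq theq u_def pw1 pw2 using Dc dc bc cc
    by (simp add: int_pow_neg_int m_assoc)
  moreover have "b \<otimes>\<^bsub>G\<^esub> u \<in> M" using bM it(1) ps_mult[OF PM] by simp
  ultimately show ?thesis using aeq nm by (simp add: right_Delta_form_def unmovable_def)
qed

end
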